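(* Let $p\ge2$. There exist admissible constants $c,C_{6.1}>0$ such that, whenever $h<c$, $\delta^2<h$, $M^{-2/d}<h$ and $\rho\ge1$, $$\sup_{0\le i\le N}\sup_{x\in\mathcal C_i}|\bar u(t_i,x)|^2\le C_{6.1}.$$
   Context: Standing setting. Fix $d\in\mathbb N^*$, $T>0$ and functions $b:\mathbb R^d\times\mathbb R\times\mathbb R^d\to\mathbb R^d$, $f:\mathbb R^d\times\mathbb R\times\mathbb R^d\to\mathbb R$, $\sigma:\mathbb R^d\times\mathbb R\to\mathbb R^{d\times d}$, $H:\mathbb R^d\to\mathbb R$ satisfying Assumption (A): $b,f,\sigma,H$ are uniformly Lipschitz continuous in all variables; $b,f,\sigma$ are bounded in the space variable $x$ and have at most linear growth in the other variables, i.e. $|b(x,y,z)|+|f(x,y,z)|+|\sigma(x,y)|\le\Lambda(1+|y|+|z|)$; $a=\sigma\sigma^*$ is uniformly elliptic; and $H$ is bounded in $C^{2+\alpha}(\mathbb R^d)$ for some $\alpha\in(0,1)$. Let $(\Omega,\mathcal F,\mathbb P)$ carry a $d$-dimensional Brownian motion $B$ with augmented natural filtration $(\mathcal F_t)$. Discretization: $N\in\mathbb N^*$, $h=T/N$, $t_k=kh$, $\Delta B^k=B_{t_{k+1}}-B_{t_k}$. Quantization: $M\in\mathbb N^*$, a grid $\Lambda(M)=\{y_1,\dots,y_M\}\subset\mathbb R^d$ with nearest-neighbour projection $G_{\Lambda(M)}$, and $g(\Delta B^k):=h^{1/2}G_{\Lambda(M)}(h^{-1/2}\Delta B^k)$;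 it is assumed that for every $q\ge1$ there is $C_{\rm Quantiz}(q,d)$ with $\mathbb E[|g(\Delta B^k)-\Delta B^k|^q]^{1/q}\le C_{\rm Quantiz}(q,d)h^{1/2}M^{-1/d}$. Spatial grids: $\delta>0$, $\mathcal C_\infty=\delta\mathbb Z^d$, $\Pi_\infty(x)$ the point with coordinates $\delta\lfloor\delta^{-1}x_j+1/2\rfloor$; $R>0$, $\rho\ge1$, $r_0=R$, $r_i=R+\rho$ for $1\le i\le N$; $\Delta_i=\{x\in\mathbb R^d:-\delta\lfloor r_i/\delta\rfloor-\delta/2\le x_j<\delta\lfloor r_i/\delta\rfloor+\delta/2,\ j=1,\dots,d\}$, $\mathcal C_i=\mathcal C_\infty\cap\Delta_i$; $\mathcal Q(r,y)=\big((y_j\vee(-\delta\lfloor r/\delta\rfloor))\wedge\delta\lfloor r/\delta\rfloor\big)_{1\le j\le d}$; $\Pi_i(x)=\mathcal Q(r_i,\Pi_\infty(x))$ (so $\Pi_i(x)=\Pi_\infty(x)$ for $x\in\Delta_i$). Algorithm: for $x\in\mathcal C_N$, $\bar u(T,x)=H(x)$, $\bar v(T,x)=\nabla_xH(x)\sigma(x,H(x))$; for $k=N-1,\dots,0$ and $x\in\mathcal C_k$: $\mathcal T^0(t_k,x)=\sigma(x,\bar u(t_{k+1},x))g(\Delta B^k)$; $\hat v(t_k,x)=\mathbb E[\bar v(t_{k+1},\Pi_{k+1}(x+\mathcal T^0(t_k,x)))]$; $\mathcal T(t_k,x)=b(x,\bar u(t_{k+1},x),\hat v(t_k,x))h+\sigma(x,\bar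 u(t_{k+1},x))g(\Delta B^k)$; $\bar v(t_k,x)=h^{-1}\mathbb E[\bar u(t_{k+1},\Pi_{k+1}(x+\mathcal T(t_k,x)))g(\Delta B^k)]$; $\bar u(t_k,x)=\mathbb E[\bar u(t_{k+1},\Pi_{k+1}(x+\mathcal T(t_k,x)))]+f(x,\bar u(t_{k+1},x),\bar v(t_k,x))h$. A constant is called admissible if it depends only on $p$, $T$, $d$, the constants in Assumption (A) and the constants $C_{\rm Quantiz}(\cdot,d)$ (not on $h,\delta,M,R,\rho$, the starting point or the time index). *)

theory Defs
  imports "HOL-Probability.Probability"
begin

(* Standard Gaussian measure on R^d = real^'d; h^{-1/2} Delta B^k has this law. *)
definition gauss :: "(real^'d::finite) measure" where
  "gauss = density lborel
     (\<lambda>z. ennreal ((2 * pi) powr (- real CARD('d) / 2) * exp (- (norm z)\<^sup>2 / 2)))"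

definition nn_proj :: "(real^'d::finite) list \<Rightarrow> real^'d \<Rightarrow> real^'d" where
  "nn_proj ys x = ys ! (LEAST i. i < length ys \<and>
       (\<forall>j < length ys. dist x (ys ! i) \<le> dist x (ys ! j)))"

(* quantized increment g(Delta B) = h^{1/2} G(h^{-1/2} Delta B), with Delta B = h^{1/2} z *)
definition gq :: "(real^'d::finite) list \<Rightarrow> real \<Rightarrow> real^'d \<Rightarrow> real^'d" where
  "gq ys h z = sqrt h *\<^sub>R nn_proj ys z"

definition partial :: "(real^'d::finite \<Rightarrow> real) \<Rightarrow> 'd \<Rightarrow> real^'d \<Rightarrow> real" where
  "partial F j x = frechet_derivative F (at x) (axis j 1)"

definition grad :: "(real^'d::finite \<Rightarrow> real) \<Rightarrow> real^'d \<Rightarrow> real^'d" where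
  "grad F x = (\<chi> j. partial F j x)"

definition C2alpha_bounded :: "(real^'d::finite \<Rightarrow> real) \<Rightarrow> real \<Rightarrow> real \<Rightarrow> bool" where
  "C2alpha_bounded F \<alpha> K \<longleftrightarrow>
     (\<forall>x. F differentiable (at x)) \<and>
     (\<forall>j x. partial F j differentiable (at x)) \<and>
     (\<forall>x. \<bar>F x\<bar> \<le> K) \<and>
     (\<forall>j x. \<bar>partial F j x\<bar> \<le> K) \<and>
     (\<forall>i j x. \<bar>partial (partial F j) i x\<bar> \<le> K) \<and>
     (\<forall>i j x y. \<bar>partial (partial F j) i x - partial (partial F j) i y\<bar> \<le> K * norm (x - y) powr \<alpha>)"

definition assumption_A ::
  "(real^'d::finite \<Rightarrow> real \<Rightarrow> real^'d \<Rightarrow> real^'d) \<Rightarrow> (real^'d \<Rightarrow> real \<Rightarrow> real^'d \<Rightarrow> real) \<Rightarrow>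
   (real^'d \<Rightarrow> real \<Rightarrow> real^'d^'d) \<Rightarrow> (real^'d \<Rightarrow> real) \<Rightarrow>
   real \<Rightarrow> real \<Rightarrow> real \<Rightarrow> real \<Rightarrow> real \<Rightarrow> bool" where
  "assumption_A b f \<sigma> H L Lam lam \<alpha> K \<longleftrightarrow>
     (\<forall>x y z x' y' z'. norm (b x y z - b x' y' z') \<le> L * (norm (x - x') + \<bar>y - y'\<bar> + norm (z - z'))) \<and>
     (\<forall>x y z x' y' z'. \<bar>f x y z - f x' y' z'\<bar> \<le> L * (norm (x - x') + \<bar>y - y'\<bar> + norm (z - z'))) \<and>
     (\<forall>x y x' y'. norm (\<sigma> x y - \<sigma> x' y') \<le> L * (norm (x - x') + \<bar>y - y'\<bar>)) \<and>
     (\<forall>x x'. \<bar>H x - H x'\<bar> \<le> L * norm (x - x')) \<and>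
     (\<forall>x y z. norm (b x y z) + \<bar>f x y z\<bar> + norm (\<sigma> x y) \<le> Lam * (1 + \<bar>y\<bar> + norm z)) \<and>
     (\<forall>x y \<xi>. \<xi> \<bullet> ((\<sigma> x y ** transpose (\<sigma> x y)) *v \<xi>) \<ge> lam * (norm \<xi>)\<^sup>2) \<and>
     C2alpha_bounded H \<alpha> K"

definition Pi_inf :: "real \<Rightarrow> real^'d::finite \<Rightarrow> real^'d" where
  "Pi_inf \<delta> x = (\<chi> j. \<delta> * real_of_int \<lfloor>x $ j / \<delta> + 1/2\<rfloor>)"

definition rad :: "real \<Rightarrow> real \<Rightarrow> nat \<Rightarrow> real" where
  "rad R \<rho> i = (if i = 0 then R else R + \<rho>)"

definition Delta_box :: "real \<Rightarrow> real \<Rightarrow> (real^'d::finite) set" where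
  "Delta_box \<delta> r = {x. \<forall>j. - \<delta> * real_of_int \<lfloor>r / \<delta>\<rfloor> - \<delta> / 2 \<le> x $ j
                          \<and> x $ j < \<delta> * real_of_int \<lfloor>r / \<delta>\<rfloor> + \<delta> / 2}"

definition C_inf :: "real \<Rightarrow> (real^'d::finite) set" where
  "C_inf \<delta> = {x. \<forall>j. \<exists>m::int. x $ j = \<delta> * real_of_int m}"

definition C_grid :: "real \<Rightarrow> real \<Rightarrow> real \<Rightarrow> nat \<Rightarrow> (real^'d::finite) set" where
  "C_grid \<delta> R \<rho> i = C_inf \<delta> \<inter> Delta_box \<delta> (rad R \<rho> i)"

definition Qproj :: "real \<Rightarrow> real \<Rightarrow> real^'d::finite \<Rightarrow> real^'d" where
  "Qproj \<delta> r y = (\<chi> j. min (max (y $ j) (- \<delta> * real_of_int \<lfloor>r / \<delta>\<rfloor>)) (\<delta> * real_of_int \<lfloor>r / \<delta>\<rfloor>))"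

definition Pi_grid :: "real \<Rightarrow> real \<Rightarrow> real \<Rightarrow> nat \<Rightarrow> real^'d::finite \<Rightarrow> real^'d" where
  "Pi_grid \<delta> R \<rho> i x = Qproj \<delta> (rad R \<rho> i) (Pi_inf \<delta> x)"

(* The scheme, indexed by j = number of backward steps: sch ... j = (ubar(t_{N-j},.), vbar(t_{N-j},.)).
   Expectations over g(Delta B^k) are integrals against the standard Gaussian z, Delta B^k = sqrt h z. *)
primrec sch ::
  "(real^'d::finite \<Rightarrow> real \<Rightarrow> real^'d \<Rightarrow> real^'d) \<Rightarrow> (real^'d \<Rightarrow> real \<Rightarrow> real^'d \<Rightarrow> real) \<Rightarrow>
   (real^'d \<Rightarrow> real \<Rightarrow> real^'d^'d) \<Rightarrow> (real^'d \<Rightarrow> real) \<Rightarrow> real \<Rightarrow> nat \<Rightarrow> (real^'d) list \<Rightarrow>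
   real \<Rightarrow> real \<Rightarrow> real \<Rightarrow> nat \<Rightarrow> (real^'d \<Rightarrow> real) \<times> (real^'d \<Rightarrow> real^'d)" where
  "sch b f \<sigma> H T N ys \<delta> R \<rho> 0 = (H, \<lambda>x. grad H x v* \<sigma> x (H x))"
| "sch b f \<sigma> H T N ys \<delta> R \<rho> (Suc j) =
    (case sch b f \<sigma> H T N ys \<delta> R \<rho> j of (u1, v1) \<Rightarrow>
      (let h = T / real N;
           k = N - Suc j;
           P = Pi_grid \<delta> R \<rho> (Suc k);
           T0 = (\<lambda>x z. \<sigma> x (u1 x) *v gq ys h z);
           vhat = (\<lambda>x. \<integral>z. v1 (P (x + T0 x z)) \<partial>gauss);
           Tk = (\<lambda>x z. h *\<^sub>R b x (u1 x) (vhat x) + \<sigma> x (u1 x) *v gq ys h z);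
           vnew = (\<lambda>x. (1 / h) *\<^sub>R (\<integral>z. u1 (P (x + Tk x z)) *\<^sub>R gq ys h z \<partial>gauss));
           unew = (\<lambda>x. (\<integral>z. u1 (P (x + Tk x z)) \<partial>gauss) + f x (u1 x) (vnew x) * h)
       in (unew, vnew)))"

definition ubar ::
  "(real^'d::finite \<Rightarrow> real \<Rightarrow> real^'d \<Rightarrow> real^'d) \<Rightarrow> (real^'d \<Rightarrow> real \<Rightarrow> real^'d \<Rightarrow> real) \<Rightarrow>
   (real^'d \<Rightarrow> real \<Rightarrow> real^'d^'d) \<Rightarrow> (real^'d \<Rightarrow> real) \<Rightarrow> real \<Rightarrow> nat \<Rightarrow> (real^'d) list \<Rightarrow>
   real \<Rightarrow> real \<Rightarrow> real \<Rightarrow> nat \<Rightarrow> real^'d \<Rightarrow> real" where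
  "ubar b f \<sigma> H T N ys \<delta> R \<rho> k = fst (sch b f \<sigma> H T N ys \<delta> R \<rho> (N - k))"

end

theory Submission
  imports Defs
begin



lemma normsq: "(norm (z::real^'d::finite))^2 = (\<Sum>b\<in>Basis. (z \<bullet> b)^2)"
proof -
  have "(norm z)^2 = z \<bullet> z" by (simp add: power2_norm_eq_inner)
  also have "\<dots> = (\<Sum>b\<in>Basis. (z \<bullet> b) * (z \<bullet> b))" by (rule euclidean_inner)
  finally show ?thesis by (simp add: power2_eq_square)
qed

lemma powr_aux: "(2*pi) powr (- real n / 2) = (1 / sqrt (2*pi)) ^ n"
proof -
  have "(2*pi) powr (- real n / 2) = ((2*pi) powr (-1/2)) powr (real n)"
    by (simp add: powr_powr)
  also have "\<dots> = ((2*pi) powr (-1/2)) ^ n" by (simp add: powr_realpow)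
  also have "(2*pi) powr (-1/2) = 1 / sqrt (2*pi)"
    by (simp add: powr_minus_divide powr_half_sqrt)
  finally show ?thesis .
qed

lemma gdens_prod:
  "(2 * pi) powr (- real CARD('d) / 2) * exp (- (norm (z::real^'d::finite))\<^sup>2 / 2)
   = (\<Prod>b\<in>Basis. std_normal_density (z \<bullet> b))"
proof -
  have "(\<Prod>b\<in>Basis. std_normal_density (z \<bullet> b)) =
        (\<Prod>b\<in>(Basis::(real^'d) set). 1 / sqrt (2*pi)) * (\<Prod>b\<in>Basis. exp (- (z \<bullet> b)\<^sup>2 / 2))"
    by (simp only: std_normal_density_def prod.distrib)
  also have "(\<Prod>b\<in>Basis. exp (- (z \<bullet> b)\<^sup>2 / 2)) = exp (\<Sum>b\<in>Basis. - (z \<bullet> b)\<^sup>2 / 2)"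
    by (simp add: exp_sum)
  also have "(\<Sum>b\<in>Basis. - (z \<bullet> b)\<^sup>2 / 2) = - (norm z)\<^sup>2 / 2"
    by (simp add: normsq sum_negf sum_divide_distrib)
  also have "(\<Prod>b\<in>(Basis::(real^'d) set). 1 / sqrt (2*pi)) = (2 * pi) powr (- real CARD('d) / 2)"
    by (simp add: powr_aux[of "CARD('d)", symmetric])
  finally show ?thesis by simp
qed

definition gd :: "real^'d::finite \<Rightarrow> real" where
  "gd z = (2 * pi) powr (- real CARD('d) / 2) * exp (- (norm z)\<^sup>2 / 2)"

lemma gd_nonneg: "0 \<le> gd z" by (simp add: gd_def)

lemma gd_meas[measurable]: "gd \<in> borel_measurable borel"
  unfolding gd_def by measurable

lemma gauss_gd: "gauss = density lborel (\<lambda>z. ennreal (gd z))"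
  by (simp add: gauss_def gd_def)

lemma nn_std: "(\<integral>\<^sup>+x. ennreal (std_normal_density x) \<partial>lborel) = 1"
proof -
  have "emeasure (density lborel (\<lambda>x. ennreal (std_normal_density x))) UNIV = 1"
    using prob_space.emeasure_space_1[OF prob_space_normal_density[where \<sigma>=1 and \<mu>=0]] by simp
  then show ?thesis by (simp add: emeasure_density)
qed

lemma gauss_prob: "prob_space (gauss :: (real^'d::finite) measure)"
proof
  have "emeasure (gauss :: (real^'d) measure) (space gauss) = (\<integral>\<^sup>+z. ennreal (gd (z::real^'d)) \<partial>lborel)"
    unfolding gauss_gd by (simp add: emeasure_density)
  also have "\<dots> = (\<integral>\<^sup>+z. (\<Prod>b\<in>(Basis::(real^'d) set). ennreal (std_normal_density (z \<bullet> b))) \<partial>lborel)"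
    by (simp only: gd_def gdens_prod) (simp add: prod_ennreal)
  also have "\<dots> = (\<Prod>b\<in>(Basis::(real^'d) set). (\<integral>\<^sup>+x. ennreal (std_normal_density x) \<partial>lborel))"
    by (rule nn_integral_lborel_prod) auto
  also have "\<dots> = 1" by (simp add: nn_std)
  finally show "emeasure (gauss :: (real^'d) measure) (space gauss) = 1" .
qed




lemma gd_prod: "gd z = (\<Prod>b\<in>Basis. std_normal_density (z \<bullet> b))"
  by (simp only: gd_def gdens_prod)

lemma nn_fin1: "(\<integral>\<^sup>+x. ennreal (std_normal_density x * (if b then x^2 else 1)) \<partial>lborel) < \<infinity>"
proof (cases b)
  case True
  have "integrable lborel (\<lambda>x. std_normal_density x * x^2)"
    by (rule integrable_std_normal_moment)
  then have "(\<integral>\<^sup>+x. ennreal (norm (std_normal_density x * x^2)) \<partial>lborel) < \<infinity>"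
    by (simp add: integrable_iff_bounded)
  then show ?thesis using True by (simp add: abs_mult)
next
  case False
  then show ?thesis by (simp add: nn_std)
qed

lemma gauss_sq_int: "integrable (gauss :: (real^'d::finite) measure) (\<lambda>z. (norm z)^2)"
proof (rule integrableI_bounded)
  show "(\<lambda>z. (norm z)^2) \<in> borel_measurable (gauss :: (real^'d::finite) measure)"
    by (simp add: gauss_gd)
  have "(\<integral>\<^sup>+z. ennreal (norm ((norm z)^2)) \<partial>(gauss :: (real^'d) measure))
       = (\<integral>\<^sup>+z. ennreal (gd (z::real^'d)) * ennreal ((norm z)^2) \<partial>lborel)"
    by (simp add: gauss_gd nn_integral_density)
  also have "\<dots> = (\<integral>\<^sup>+z. (\<Sum>c\<in>(Basis::(real^'d) set). ennreal (gd z * (z \<bullet> c)^2)) \<partial>lborel)"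
    by (intro nn_integral_cong) (simp add: normsq ennreal_mult gd_nonneg sum_nonneg sum_distrib_left[symmetric] sum_ennreal)
  also have "\<dots> = (\<Sum>c\<in>(Basis::(real^'d) set). (\<integral>\<^sup>+z. ennreal (gd z * (z \<bullet> c)^2) \<partial>lborel))"
    by (rule nn_integral_sum) auto
  also have "\<dots> < \<infinity>"
  proof -
   have fin: "(\<integral>\<^sup>+z. ennreal (gd z * (z \<bullet> c)^2) \<partial>lborel) < \<infinity>" if c: "c \<in> Basis" for c :: "real^'d"
   proof -
    have "(\<integral>\<^sup>+z. ennreal (gd z * (z \<bullet> c)^2) \<partial>lborel)
        = (\<integral>\<^sup>+z. (\<Prod>b\<in>(Basis::(real^'d) set). ennreal (std_normal_density (z \<bullet> b) * (if b = c then (z \<bullet> b)^2 else 1))) \<partial>lborel)"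
    proof (intro nn_integral_cong)
      fix z :: "real^'d"
      have "(\<Prod>b\<in>(Basis::(real^'d) set). std_normal_density (z \<bullet> b) * (if b = c then (z \<bullet> b)^2 else 1))
          = (\<Prod>b\<in>(Basis::(real^'d) set). std_normal_density (z \<bullet> b)) * (\<Prod>b\<in>(Basis::(real^'d) set). (if b = c then (z \<bullet> b)^2 else 1))"
        by (rule prod.distrib)
      also have "(\<Prod>b\<in>(Basis::(real^'d) set). (if b = c then (z \<bullet> b)^2 else 1)) = (z \<bullet> c)^2"
        using c by (simp add: prod.delta)
      finally have calc: "(\<Prod>b\<in>(Basis::(real^'d) set). std_normal_density (z \<bullet> b) * (if b = c then (z \<bullet> b)^2 else 1)) = gd z * (z \<bullet> c)^2"
        by (simp only: gd_prod)
      have "ennreal (gd z * (z \<bullet> c)^2) = ennreal (\<Prod>b\<in>(Basis::(real^'d) set). std_normal_density (z \<bullet> b) * (if b = c then (z \<bullet> b)^2 else 1))"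
        by (simp only: calc)
      also have "\<dots> = (\<Prod>b\<in>(Basis::(real^'d) set). ennreal (std_normal_density (z \<bullet> b) * (if b = c then (z \<bullet> b)^2 else 1)))"
        by (rule prod_ennreal[symmetric]) simp
      finally show "ennreal (gd z * (z \<bullet> c)^2) = (\<Prod>b\<in>(Basis::(real^'d) set). ennreal (std_normal_density (z \<bullet> b) * (if b = c then (z \<bullet> b)^2 else 1)))" .
    qed
    also have "\<dots> = (\<Prod>b\<in>(Basis::(real^'d) set). (\<integral>\<^sup>+x. ennreal (std_normal_density x * (if b = c then x^2 else 1)) \<partial>lborel))"
      by (rule nn_integral_lborel_prod) auto
    also have "\<dots> < \<infinity>"
      using nn_fin1 by (simp add: less_top[symmetric] ennreal_prod_eq_top)
    finally show "(\<integral>\<^sup>+z. ennreal (gd z * (z \<bullet> c)^2) \<partial>lborel) < \<infinity>" .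
   qed
   show ?thesis using fin by (simp only: ennreal_sum_less_top finite_Basis ball_simps infinity_ennreal_def) blast
  qed
  finally show "(\<integral>\<^sup>+z. ennreal (norm ((norm z)^2)) \<partial>(gauss :: (real^'d) measure)) < \<infinity>" .
qed

lemma gauss_id_int: "integrable (gauss :: (real^'d::finite) measure) (\<lambda>z. z)"
proof -
  interpret prob_space "gauss :: (real^'d) measure" by (rule gauss_prob)
  show ?thesis
  proof (rule Bochner_Integration.integrable_bound)
    show "integrable gauss (\<lambda>z::real^'d. 1 + (norm z)^2)"
      using gauss_sq_int by auto
    show "(\<lambda>z. z) \<in> borel_measurable (gauss :: (real^'d) measure)" by (simp add: gauss_gd)
    show "AE z in gauss. norm z \<le> norm (1 + (norm (z::real^'d))^2)"
    proof (intro AE_I2)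
      fix z :: "real^'d"
      have e1: "0 \<le> (norm z - 1)^2" by simp
      have e2: "(norm z - 1)^2 = (norm z)^2 - 2 * norm z + 1" by (simp add: power2_diff)
      have "norm z \<le> 1 + (norm z)^2" using e1 e2 norm_ge_zero[of z] by linarith
      then show "norm z \<le> norm (1 + (norm z)^2)" by simp
    qed
  qed
qed

lemma gauss_mean: "(\<integral>z. z \<partial>(gauss :: (real^'d::finite) measure)) = 0"
proof -
  define I where "I = (\<integral>z. gd z *\<^sub>R z \<partial>(lborel :: (real^'d) measure))"
  have "(\<integral>z. z \<partial>(gauss :: (real^'d) measure)) = I"
    unfolding I_def gauss_gd by (subst integral_density) (auto simp: gd_nonneg)
  moreover have "I = - I"
  proof -
    have "I = (\<integral>z. gd z *\<^sub>R z \<partial>(density (distr lborel borel (\<lambda>x::real^'d. 0 + (-1) *\<^sub>R x)) (\<lambda>_. \<bar>-1::real\<bar> ^ DIM(real^'d))))"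
      unfolding I_def by (subst lborel_affine[of "-1" 0, symmetric]) simp_all
    also have "\<dots> = (\<integral>z. gd z *\<^sub>R z \<partial>(distr lborel borel (\<lambda>x::real^'d. - x)))"
      by (simp add: density_1)
    also have "\<dots> = (\<integral>z. gd (- z) *\<^sub>R (- z) \<partial>(lborel :: (real^'d) measure))"
      by (subst integral_distr) auto
    also have "\<dots> = - I"
      unfolding I_def gd_def by (simp only: norm_minus_cancel scaleR_minus_right integral_minus)
    finally show ?thesis .
  qed
  moreover have "I = 0"
  proof -
    have "I + I = 0" using \<open>I = - I\<close> by (metis add.right_inverse)
    then have "(2::real) *\<^sub>R I = 0" by (simp add: scaleR_2)
    then show ?thesis by simp
  qed
  ultimately show ?thesis by simp
qed



lemma sq3: "(p + q + r)^2 \<le> 3 * (p^2 + q^2 + (r::real)^2)"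
proof -
  have "0 \<le> (p - q)^2 + (q - r)^2 + (p - r)^2" by simp
  then show ?thesis by (simp add: power2_eq_square algebra_simps)
qed

lemma real_step:
  fixes a W A y F nv h Lam c1 c2 :: real
  defines "\<gamma> \<equiv> 12 * Lam^2 * c2 + 1"
  assumes aW: "a^2 + W \<le> A" and W0: "0 \<le> W" and yA: "y^2 \<le> A"
    and F: "\<bar>F\<bar> \<le> Lam * (1 + \<bar>y\<bar> + nv)" and nv0: "0 \<le> nv"
    and hv: "h * nv^2 \<le> 2 * c2 * W + 2 * c1^2 * h * a^2"
    and h0: "0 < h" and hg: "h * \<gamma> \<le> 1" and h1: "h \<le> 1"
    and c2: "0 \<le> c2" and Lam: "0 \<le> Lam"
  shows "(a + F * h)^2 \<le> A + (\<gamma> + 12 * Lam^2 * c1^2 + 6 * Lam^2) * h * (A + 1)"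
proof -
  have g1: "1 \<le> \<gamma>" unfolding \<gamma>_def using c2 by simp
  define P where "P = h + 1 / \<gamma>"
  have P0: "0 \<le> P" unfolding P_def using h0 g1 by simp
  have Pg: "P \<le> 2 / \<gamma>" unfolding P_def using hg g1 by (simp add: field_simps)
  have "2 / \<gamma> \<le> 2" using g1 by (simp add: field_simps)
  then have P2: "P \<le> 2" using Pg by linarith
  have a2: "a^2 \<le> A" using aW W0 by linarith
  have A0: "0 \<le> A" using a2 zero_le_power2[of a] by linarith
  have s1: "(a + F * h)^2 \<le> (1 + \<gamma> * h) * a^2 + h * P * F^2"
  proof -
    have "0 \<le> (h / \<gamma>) * (\<gamma> * a - F)^2" using h0 g1 by simp
    moreover have "(h / \<gamma>) * (\<gamma> * a - F)^2 = \<gamma> * h * a^2 + h * F^2 / \<gamma> - 2 * a * F * h"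
      using g1 by (simp add: power2_eq_square field_simps)
    ultimately have "2 * a * F * h \<le> \<gamma> * h * a^2 + h * F^2 / \<gamma>" by linarith
    then show ?thesis unfolding P_def by (simp add: power2_eq_square algebra_simps)
  qed
  have F2: "F^2 \<le> 3 * Lam^2 * (1 + y^2 + nv^2)"
  proof -
    have "\<bar>F\<bar>^2 \<le> (Lam * (1 + \<bar>y\<bar> + nv))^2"
      using F by (intro power_mono) auto
    also have "\<dots> = Lam^2 * (1 + \<bar>y\<bar> + nv)^2" by (simp add: power_mult_distrib)
    also have "\<dots> \<le> Lam^2 * (3 * (1^2 + \<bar>y\<bar>^2 + nv^2))"
      by (intro mult_left_mono sq3) simp
    finally show ?thesis by (simp add: algebra_simps)
  qed
  have s2: "h * P * F^2 \<le> 3 * Lam^2 * P * (h + h * y^2) + 3 * Lam^2 * P * (h * nv^2)"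
  proof -
    have "h * P * F^2 \<le> h * P * (3 * Lam^2 * (1 + y^2 + nv^2))"
      using F2 h0 P0 by (intro mult_left_mono) auto
    then show ?thesis by (simp add: algebra_simps)
  qed
  have s3: "3 * Lam^2 * P * (h * nv^2) \<le> W + 12 * Lam^2 * c1^2 * h * a^2"
  proof -
    have "3 * Lam^2 * P * (h * nv^2) \<le> 3 * Lam^2 * P * (2 * c2 * W + 2 * c1^2 * h * a^2)"
      using hv P0 by (intro mult_left_mono) auto
    also have "\<dots> = (6 * Lam^2 * c2 * P) * W + (6 * Lam^2 * c1^2 * h * a^2) * P"
      by (simp add: algebra_simps)
    also have "\<dots> \<le> 1 * W + (6 * Lam^2 * c1^2 * h * a^2) * 2"
    proof (intro add_mono mult_right_mono mult_left_mono)
      have "6 * Lam^2 * c2 * P \<le> 6 * Lam^2 * c2 * (2 / \<gamma>)"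
        using Pg c2 by (intro mult_left_mono) auto
      also have "\<dots> = (12 * Lam^2 * c2) / \<gamma>" by simp
      also have "\<dots> \<le> 1" using g1 by (subst pos_divide_le_eq) (auto simp: \<gamma>_def algebra_simps)
      finally show "6 * Lam^2 * c2 * P \<le> 1" .
    qed (use W0 P2 h0 in auto)
    finally show ?thesis by simp
  qed
  have s4: "3 * Lam^2 * P * (h + h * y^2) \<le> 6 * Lam^2 * (h + h * A)"
  proof -
    have "3 * Lam^2 * P * (h + h * y^2) \<le> 3 * Lam^2 * 2 * (h + h * A)"
      using P2 P0 h0 yA by (intro mult_mono) (auto intro: mult_left_mono)
    then show ?thesis by simp
  qed
  have s5: "\<gamma> * h * a^2 + 12 * Lam^2 * c1^2 * h * a^2 \<le> \<gamma> * h * A + 12 * Lam^2 * c1^2 * h * A"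
    using a2 h0 g1 by (intro add_mono mult_left_mono) auto
  have "(a + F * h)^2 \<le> a^2 + W + (\<gamma> * h * A + 12 * Lam^2 * c1^2 * h * A + 6 * Lam^2 * (h + h * A))"
    using s1 s2 s3 s4 s5 by (simp add: algebra_simps)
  also have "\<dots> \<le> A + (\<gamma> + 12 * Lam^2 * c1^2 + 6 * Lam^2) * h * (A + 1)"
  proof -
    have "\<gamma> * h * A + 12 * Lam^2 * c1^2 * h * A + 6 * Lam^2 * (h + h * A)
         \<le> (\<gamma> + 12 * Lam^2 * c1^2 + 6 * Lam^2) * h * (A + 1)"
      using h0 A0 g1 by (simp add: algebra_simps)
    then show ?thesis using aW by linarith
  qed
  finally show ?thesis .
qed




lemma disc_le:
  fixes A B X :: real
  assumes d: "\<And>t. 0 \<le> A - 2 * t * X + t^2 * B" and B: "0 \<le> B"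
  shows "X^2 \<le> A * B"
proof (cases "B = 0")
  case True
  have "X = 0"
  proof (rule ccontr)
    assume X: "X \<noteq> 0"
    have "0 \<le> A - 2 * ((A + 1) / (2 * X)) * X" using d[of "(A + 1) / (2 * X)"] True by simp
    also have "\<dots> = -1" using X by (simp add: field_simps)
    finally show False by simp
  qed
  then show ?thesis using True by simp
next
  case False
  then have B0: "0 < B" using B by simp
  have "0 \<le> A - 2 * (X / B) * X + (X / B)^2 * B" by (rule d)
  also have "\<dots> = (A * B - X^2) / B" using B0 by (simp add: field_simps power2_eq_square)
  finally have "0 \<le> (A * B - X^2) / B" .
  then have "0 \<le> A * B - X^2" using B0 by (simp add: zero_le_divide_iff)
  then show ?thesis by simp
qed

lemma cs_real:
  fixes f g :: "'a \<Rightarrow> real"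
  assumes [measurable]: "f \<in> borel_measurable M" "g \<in> borel_measurable M"
    and fi: "integrable M (\<lambda>x. (f x)^2)" and gi: "integrable M (\<lambda>x. (g x)^2)"
  shows "integrable M (\<lambda>x. f x * g x)"
    and "(\<integral>x. f x * g x \<partial>M)^2 \<le> (\<integral>x. (f x)^2 \<partial>M) * (\<integral>x. (g x)^2 \<partial>M)"
proof -
  show ifg: "integrable M (\<lambda>x. f x * g x)"
  proof (rule Bochner_Integration.integrable_bound)
    show "integrable M (\<lambda>x. (f x)^2 + (g x)^2)" using fi gi by simp
    show "(\<lambda>x. f x * g x) \<in> borel_measurable M" by simp
    show "AE x in M. norm (f x * g x) \<le> norm ((f x)^2 + (g x)^2)"
    proof (intro AE_I2)
      fix x
      have "0 \<le> (\<bar>f x\<bar> - \<bar>g x\<bar>)^2" by simp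
      then have "2 * \<bar>f x\<bar> * \<bar>g x\<bar> \<le> (f x)^2 + (g x)^2"
        by (simp add: power2_eq_square algebra_simps)
      moreover have "0 \<le> \<bar>f x\<bar> * \<bar>g x\<bar>" by simp
      ultimately have "\<bar>f x\<bar> * \<bar>g x\<bar> \<le> (f x)^2 + (g x)^2" by linarith
      then show "norm (f x * g x) \<le> norm ((f x)^2 + (g x)^2)"
        by (simp add: abs_mult)
    qed
  qed
  show "(\<integral>x. f x * g x \<partial>M)^2 \<le> (\<integral>x. (f x)^2 \<partial>M) * (\<integral>x. (g x)^2 \<partial>M)"
  proof (rule disc_le)
    fix t :: real
    have eq: "(\<lambda>x. (f x - t * g x)^2) = (\<lambda>x. (f x)^2 - (2 * t) * (f x * g x) + t^2 * (g x)^2)"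
      by (simp add: fun_eq_iff power2_eq_square algebra_simps)
    have "0 \<le> (\<integral>x. (f x - t * g x)^2 \<partial>M)" by simp
    also have "\<dots> = (\<integral>x. (f x)^2 \<partial>M) - 2 * t * (\<integral>x. f x * g x \<partial>M) + t^2 * (\<integral>x. (g x)^2 \<partial>M)"
      unfolding eq using fi gi ifg by simp
    finally show "0 \<le> (\<integral>x. (f x)^2 \<partial>M) - 2 * t * (\<integral>x. f x * g x \<partial>M) + t^2 * (\<integral>x. (g x)^2 \<partial>M)" .
  next
    show "0 \<le> (\<integral>x. (g x)^2 \<partial>M)" by simp
  qed
qed


lemma abs_le_1_sq: "\<bar>u::real\<bar> \<le> 1 + u^2"
proof -
  have e1: "0 \<le> (\<bar>u\<bar> - 1)^2" by simp
  have e2: "(\<bar>u\<bar> - 1)^2 = u^2 - 2 * \<bar>u\<bar> + 1" by (simp add: power2_diff)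
  show ?thesis using e1 e2 abs_ge_zero[of u] by linarith
qed

lemma prob_step:
  fixes M :: "'a measure" and U :: "'a \<Rightarrow> real" and G :: "'a \<Rightarrow> 'b::euclidean_space"
  assumes P: "prob_space M"
    and [measurable]: "U \<in> borel_measurable M" "G \<in> borel_measurable M"
    and UA: "\<And>z. (U z)^2 \<le> A"
    and GB: "\<And>z. norm (G z) \<le> BG"
    and S: "(\<integral>z. (norm (G z))^2 \<partial>M) \<le> c2 * h"
    and m: "norm (\<integral>z. G z \<partial>M) \<le> c1 * h"
    and yA: "y^2 \<le> A"
    and F: "\<bar>F\<bar> \<le> Lam * (1 + \<bar>y\<bar> + norm ((1 / h) *\<^sub>R (\<integral>z. U z *\<^sub>R G z \<partial>M)))"
    and h0: "0 < h" and hg: "h * (12 * Lam^2 * c2 + 1) \<le> 1" and h1: "h \<le> 1"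
    and c2: "0 \<le> c2" and c1: "0 \<le> c1" and Lam: "0 \<le> Lam"
  shows "((\<integral>z. U z \<partial>M) + F * h)^2
         \<le> A + ((12 * Lam^2 * c2 + 1) + 12 * Lam^2 * c1^2 + 6 * Lam^2) * h * (A + 1)"
proof -
  interpret prob_space M by (rule P)
  have Ub: "norm (U z) \<le> 1 + A" for z
    using UA[of z] abs_le_1_sq[of "U z"] by simp
  have iU: "integrable M U" by (rule integrable_const_bound[where B="1 + A"]) (use Ub in auto)
  have iU2: "integrable M (\<lambda>z. (U z)^2)"
    by (rule integrable_const_bound[where B="A"]) (use UA in auto)
  have iG: "integrable M G" by (rule integrable_const_bound[where B="BG"]) (use GB in auto)
  have BG0: "0 \<le> BG" using GB[of undefined] norm_ge_zero order_trans by blast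
  have iG2: "integrable M (\<lambda>z. (norm (G z))^2)"
    by (rule integrable_const_bound[where B="BG^2"]) (use GB in \<open>auto intro!: power_mono\<close>)
  define a where "a = (\<integral>z. U z \<partial>M)"
  define W where "W = (\<integral>z. (U z - a)^2 \<partial>M)"
  have iUa2: "integrable M (\<lambda>z. (U z - a)^2)"
  proof -
    have "(\<lambda>z. (U z - a)^2) = (\<lambda>z. (U z)^2 - 2 * a * U z + a^2)"
      by (simp add: fun_eq_iff power2_diff)
    then show ?thesis using iU iU2 by simp
  qed
  have W_eq: "W = (\<integral>z. (U z)^2 \<partial>M) - a^2"
  proof -
    have "(\<lambda>z. (U z - a)^2) = (\<lambda>z. (U z)^2 - 2 * a * U z + a^2)"
      by (simp add: fun_eq_iff power2_diff)
    then have "W = (\<integral>z. (U z)^2 - 2 * a * U z + a^2 \<partial>M)" unfolding W_def by simp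
    also have "\<dots> = (\<integral>z. (U z)^2 \<partial>M) - 2 * a * a + a^2"
      using iU iU2 by (simp add: a_def prob_space)
    finally show ?thesis by (simp add: power2_eq_square)
  qed
  have intU2: "(\<integral>z. (U z)^2 \<partial>M) \<le> A"
  proof -
    have "(\<integral>z. (U z)^2 \<partial>M) \<le> (\<integral>z. A \<partial>M)"
      using iU2 UA by (intro integral_mono) auto
    then show ?thesis by (simp add: prob_space)
  qed
  have aW: "a^2 + W \<le> A" using W_eq intU2 by simp
  have W0: "0 \<le> W" unfolding W_def by simp
  define X where "X = (\<integral>z. \<bar>U z - a\<bar> * norm (G z) \<partial>M)"
  have csr: "integrable M (\<lambda>z. \<bar>U z - a\<bar> * norm (G z))"
       "X^2 \<le> (\<integral>z. \<bar>U z - a\<bar>^2 \<partial>M) * (\<integral>z. (norm (G z))^2 \<partial>M)"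
    unfolding X_def using iUa2 iG2 by (intro cs_real; simp)+
  have X0: "0 \<le> X" unfolding X_def by simp
  have XW: "X^2 \<le> W * (c2 * h)"
  proof -
    have "X^2 \<le> W * (\<integral>z. (norm (G z))^2 \<partial>M)" using csr(2) unfolding W_def by simp
    also have "\<dots> \<le> W * (c2 * h)" using S W0 by (intro mult_left_mono) auto
    finally show ?thesis .
  qed
  have iUaG: "integrable M (\<lambda>z. (U z - a) *\<^sub>R G z)"
  proof (rule integrable_const_bound[where B="(1 + A + \<bar>a\<bar>) * BG"])
    show "AE z in M. norm ((U z - a) *\<^sub>R G z) \<le> (1 + A + \<bar>a\<bar>) * BG"
    proof (intro AE_I2)
      fix z
      have "\<bar>U z - a\<bar> \<le> 1 + A + \<bar>a\<bar>" using Ub[of z] by auto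
      then show "norm ((U z - a) *\<^sub>R G z) \<le> (1 + A + \<bar>a\<bar>) * BG"
        using GB[of z] by (simp add: mult_mono)
    qed
  qed simp
  have hv_eq: "(\<integral>z. U z *\<^sub>R G z \<partial>M) = (\<integral>z. (U z - a) *\<^sub>R G z \<partial>M) + a *\<^sub>R (\<integral>z. G z \<partial>M)"
  proof -
    have "(\<lambda>z. U z *\<^sub>R G z) = (\<lambda>z. (U z - a) *\<^sub>R G z + a *\<^sub>R G z)"
      by (simp add: fun_eq_iff algebra_simps)
    then show ?thesis using iUaG iG by simp
  qed
  have n1: "norm (\<integral>z. (U z - a) *\<^sub>R G z \<partial>M) \<le> X"
  proof -
    have "norm (\<integral>z. (U z - a) *\<^sub>R G z \<partial>M) \<le> (\<integral>z. norm ((U z - a) *\<^sub>R G z) \<partial>M)"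
      by (rule integral_norm_bound)
    then show ?thesis unfolding X_def by simp
  qed
  define nv where "nv = norm ((1 / h) *\<^sub>R (\<integral>z. U z *\<^sub>R G z \<partial>M))"
  have nv0: "0 \<le> nv" unfolding nv_def by simp
  have hnv: "h * nv \<le> X + \<bar>a\<bar> * (c1 * h)"
  proof -
    have "h * nv = norm (\<integral>z. U z *\<^sub>R G z \<partial>M)" unfolding nv_def using h0 by simp
    also have "\<dots> \<le> norm (\<integral>z. (U z - a) *\<^sub>R G z \<partial>M) + norm (a *\<^sub>R (\<integral>z. G z \<partial>M))"
      unfolding hv_eq by (rule norm_triangle_ineq)
    also have "\<dots> \<le> X + \<bar>a\<bar> * (c1 * h)"
      using n1 m by (intro add_mono) (auto intro: mult_left_mono)
    finally show ?thesis .
  qed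
  have hv: "h * nv^2 \<le> 2 * c2 * W + 2 * c1^2 * h * a^2"
  proof -
    have "(h * nv)^2 \<le> (X + \<bar>a\<bar> * (c1 * h))^2"
      using hnv h0 nv0 by (intro power_mono) auto
    also have "\<dots> \<le> 2 * X^2 + 2 * (\<bar>a\<bar> * (c1 * h))^2"
    proof -
      have "0 \<le> (X - \<bar>a\<bar> * (c1 * h))^2" by simp
      then show ?thesis by (simp add: power2_eq_square algebra_simps)
    qed
    also have "\<dots> \<le> 2 * (W * (c2 * h)) + 2 * (\<bar>a\<bar> * (c1 * h))^2"
      using XW by simp
    finally have "(h * nv)^2 \<le> h * (2 * c2 * W + 2 * c1^2 * h * a^2)"
      by (simp add: power2_eq_square algebra_simps)
    then have "h * (h * nv^2) \<le> h * (2 * c2 * W + 2 * c1^2 * h * a^2)"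
      by (simp add: power2_eq_square algebra_simps)
    then show ?thesis using h0 by simp
  qed
  have F': "\<bar>F\<bar> \<le> Lam * (1 + \<bar>y\<bar> + nv)" using F unfolding nv_def .
  show ?thesis
    unfolding a_def[symmetric]
    by (rule real_step[OF aW W0 yA F' nv0 hv h0 _ h1 c2 Lam]) (use hg in \<open>simp add: algebra_simps\<close>)
qed




definition idx :: "(real^'d::finite) list \<Rightarrow> real^'d \<Rightarrow> nat" where
  "idx ys z = (LEAST i. i < length ys \<and> (\<forall>j < length ys. dist z (ys ! i) \<le> dist z (ys ! j)))"

lemma nn_proj_idx: "nn_proj ys z = ys ! idx ys z"
  by (simp add: nn_proj_def idx_def)

lemma idx_meas: "idx ys \<in> measurable borel (count_space UNIV)"
  unfolding idx_def[abs_def] by measurable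

lemma nn_comp_meas: "(\<lambda>z. \<Phi> (nn_proj ys z)) \<in> measurable borel (borel :: 'c::topological_space measure)"
proof -
  have "(\<lambda>z. \<Phi> (nn_proj ys z)) = (\<lambda>i. \<Phi> (ys ! i)) \<circ> idx ys"
    by (simp add: fun_eq_iff nn_proj_idx)
  also have "\<dots> \<in> measurable borel borel"
    by (rule measurable_comp[OF idx_meas]) simp
  finally show ?thesis .
qed

lemma idx_lt: assumes "ys \<noteq> []" shows "idx ys z < length ys"
proof -
  let ?n = "length ys"
  let ?f = "\<lambda>j. dist z (ys ! j)"
  have fin: "finite (?f ` {..<?n})" "?f ` {..<?n} \<noteq> {}" using assms by auto
  obtain i where i: "i < ?n" "?f i = Min (?f ` {..<?n})"
    using Min_in[OF fin] by auto
  have "\<forall>j < ?n. ?f i \<le> ?f j" using i fin by auto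
  then have "\<exists>i. i < ?n \<and> (\<forall>j < ?n. dist z (ys ! i) \<le> dist z (ys ! j))" using i by blast
  then show ?thesis unfolding idx_def by (rule LeastI2_ex) auto
qed

lemma nn_proj_in: "ys \<noteq> [] \<Longrightarrow> nn_proj ys z \<in> set ys"
  using idx_lt[of ys z] by (simp add: nn_proj_idx)

lemma nn_proj_bound: "ys \<noteq> [] \<Longrightarrow> norm (nn_proj ys z) \<le> (\<Sum>w\<in>set ys. norm w)"
  using nn_proj_in[of ys z] by (intro member_le_sum) auto

lemma gauss_meas_iff: "measurable (gauss :: (real^'d::finite) measure) N = measurable borel N"
  unfolding gauss_gd by (intro measurable_cong_sets) auto

lemma powr_sq: "0 \<le> x \<Longrightarrow> (x::real) powr 2 = x^2"
  by simp

lemma quant: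
  fixes ys :: "(real^'d::finite) list" and h :: real and Cq :: "real \<Rightarrow> real"
  defines "D \<equiv> (\<integral>z. (norm z)^2 \<partial>(gauss :: (real^'d) measure))"
  assumes ys: "ys \<noteq> []" and h0: "0 < h" and h1: "h \<le> 1"
    and hyp: "\<forall>q \<ge> 1. (\<integral>z. norm (gq ys h z - sqrt h *\<^sub>R z) powr q \<partial>gauss) powr (1 / q)
                 \<le> Cq q * sqrt h * real (length ys) powr (- 1 / real CARD('d))"
    and mh: "real (length ys) powr (- 2 / real CARD('d)) < h"
  shows "(\<integral>z. (norm (gq ys h z))^2 \<partial>gauss) \<le> (2 * (Cq 2)^2 + 2 * D) * h"
    and "norm (\<integral>z. gq ys h z \<partial>gauss) \<le> \<bar>Cq 1\<bar> * h"
    and "(\<lambda>z. gq ys h z) \<in> borel_measurable gauss"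
    and "\<And>z. norm (gq ys h z) \<le> sqrt h * (\<Sum>w\<in>set ys. norm w)"
proof -
  interpret prob_space "gauss :: (real^'d) measure" by (rule gauss_prob)
  define m1 where "m1 = real (length ys) powr (- 1 / real CARD('d))"
  have m10: "0 \<le> m1" unfolding m1_def by simp
  have lpos: "0 < real (length ys)" using ys by simp
  have "m1^2 = real (length ys) powr (- 2 / real CARD('d))"
    unfolding m1_def power2_eq_square using lpos by (simp add: powr_add[symmetric])
  then have m1h: "m1^2 < h" using mh by simp
  have m1s: "m1 \<le> sqrt h"
    using m1h m10 by (metis less_imp_le real_le_rsqrt)
  let ?G = "\<lambda>z. gq ys h z"
  let ?B = "sqrt h * (\<Sum>w\<in>set ys. norm w)"
  show Gm: "?G \<in> borel_measurable gauss"
    unfolding gauss_meas_iff gq_def by (rule nn_comp_meas)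
  show GB: "\<And>z. norm (?G z) \<le> ?B"
    unfolding gq_def using nn_proj_bound[OF ys] h0 by (simp add: mult_left_mono)
  have iG: "integrable gauss ?G"
    by (rule integrable_const_bound[where B="?B"]) (use GB Gm in auto)
  have iz: "integrable gauss (\<lambda>z::real^'d. sqrt h *\<^sub>R z)" by (rule integrable_scaleR_right[OF gauss_id_int])
  have iz2: "integrable gauss (\<lambda>z::real^'d. (norm z)^2)" by (rule gauss_sq_int)
  have iGz: "integrable gauss (\<lambda>z. ?G z - sqrt h *\<^sub>R z)" using iG iz by simp
  have iG2: "integrable gauss (\<lambda>z. (norm (?G z))^2)"
    by (rule integrable_const_bound[where B="?B^2"]) (use GB Gm in \<open>auto intro!: power_mono\<close>)
  have pt: "(norm (a - b))^2 \<le> 2 * (norm a)^2 + 2 * (norm b)^2" for a b :: "real^'d"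
  proof -
    have "(norm (a - b))^2 \<le> (norm a + norm b)^2"
      by (intro power_mono norm_triangle_ineq4) simp
    also have "\<dots> \<le> 2 * (norm a)^2 + 2 * (norm b)^2"
    proof -
      have "0 \<le> (norm a - norm b)^2" by simp
      then show ?thesis by (simp add: power2_eq_square algebra_simps)
    qed
    finally show ?thesis .
  qed
  have nsz: "(norm (sqrt h *\<^sub>R z))^2 = h * (norm z)^2" for z :: "real^'d"
    using h0 by (simp add: power_mult_distrib)
  have iGz2: "integrable gauss (\<lambda>z. (norm (?G z - sqrt h *\<^sub>R z))^2)"
  proof (rule Bochner_Integration.integrable_bound)
    show "integrable gauss (\<lambda>z. 2 * (norm (?G z))^2 + 2 * (h * (norm z)^2))"
      using iG2 iz2 by simp
    show "(\<lambda>z. (norm (?G z - sqrt h *\<^sub>R z))^2) \<in> borel_measurable gauss"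
      using Gm by (simp add: gauss_gd)
    show "AE z in gauss. norm ((norm (?G z - sqrt h *\<^sub>R z))^2) \<le> norm (2 * (norm (?G z))^2 + 2 * (h * (norm z)^2))"
    proof (intro AE_I2)
      fix z :: "real^'d"
      have "(norm (?G z - sqrt h *\<^sub>R z))^2 \<le> 2 * (norm (?G z))^2 + 2 * (h * (norm z)^2)"
        using pt[of "?G z" "sqrt h *\<^sub>R z"] nsz[of z] by simp
      moreover have "0 \<le> 2 * (norm (?G z))^2 + 2 * (h * (norm z)^2)" using h0 by simp
      ultimately show "norm ((norm (?G z - sqrt h *\<^sub>R z))^2) \<le> norm (2 * (norm (?G z))^2 + 2 * (h * (norm z)^2))"
        by simp
    qed
  qed
  define E1 where "E1 = (\<integral>z. norm (?G z - sqrt h *\<^sub>R z) \<partial>gauss)"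
  have E1b: "E1 \<le> \<bar>Cq 1\<bar> * h"
  proof -
    have "E1 = (\<integral>z. norm (?G z - sqrt h *\<^sub>R z) powr 1 \<partial>gauss) powr (1 / 1)"
      unfolding E1_def by simp
    also have "\<dots> \<le> Cq 1 * sqrt h * m1" using hyp[rule_format, of 1] unfolding m1_def by simp
    also have "\<dots> \<le> \<bar>Cq 1\<bar> * sqrt h * sqrt h"
      using m1s m10 h0 by (intro mult_mono) auto
    also have "\<dots> = \<bar>Cq 1\<bar> * h" using h0 by (simp add: mult.assoc)
    finally show ?thesis .
  qed
  show "norm (\<integral>z. ?G z \<partial>gauss) \<le> \<bar>Cq 1\<bar> * h"
  proof -
    have "(\<integral>z. ?G z \<partial>gauss) = (\<integral>z. ?G z - sqrt h *\<^sub>R z \<partial>gauss) + (\<integral>z. sqrt h *\<^sub>R z \<partial>gauss)"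
      using iGz iz by (subst Bochner_Integration.integral_add[symmetric]) auto
    also have "(\<integral>z. sqrt h *\<^sub>R z \<partial>gauss) = sqrt h *\<^sub>R (\<integral>z. z \<partial>(gauss :: (real^'d) measure))"
      by (rule integral_scaleR_right)
    also have "\<dots> = 0" unfolding gauss_mean by simp
    finally have "norm (\<integral>z. ?G z \<partial>gauss) = norm (\<integral>z. ?G z - sqrt h *\<^sub>R z \<partial>gauss)" by simp
    also have "\<dots> \<le> E1" unfolding E1_def by (rule integral_norm_bound)
    finally show ?thesis using E1b by simp
  qed
  define E2 where "E2 = (\<integral>z. (norm (?G z - sqrt h *\<^sub>R z))^2 \<partial>gauss)"
  have E20: "0 \<le> E2" unfolding E2_def by simp
  have E2b: "E2 \<le> (Cq 2)^2 * h"
  proof -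
    have "E2 powr (1 / 2) = (\<integral>z. norm (?G z - sqrt h *\<^sub>R z) powr 2 \<partial>gauss) powr (1 / 2)"
      unfolding E2_def by simp
    also have "\<dots> \<le> Cq 2 * sqrt h * m1" using hyp[rule_format, of 2] unfolding m1_def by simp
    finally have r: "sqrt E2 \<le> Cq 2 * sqrt h * m1" using E20 by (simp add: powr_half_sqrt)
    have "E2 = (sqrt E2)^2" using E20 by simp
    also have "\<dots> \<le> (Cq 2 * sqrt h * m1)^2"
      using r E20 by (intro power_mono) auto
    also have "\<dots> = (Cq 2)^2 * h * m1^2" using h0 by (simp add: power_mult_distrib)
    also have "\<dots> \<le> (Cq 2)^2 * h * 1"
      using m1h h1 h0 by (intro mult_left_mono) auto
    finally show ?thesis by simp
  qed
  show "(\<integral>z. (norm (?G z))^2 \<partial>gauss) \<le> (2 * (Cq 2)^2 + 2 * D) * h"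
  proof -
    have "(\<integral>z. (norm (?G z))^2 \<partial>gauss)
        \<le> (\<integral>z. 2 * (norm (?G z - sqrt h *\<^sub>R z))^2 + 2 * (h * (norm z)^2) \<partial>gauss)"
    proof (rule integral_mono)
      show "integrable gauss (\<lambda>z. 2 * (norm (?G z - sqrt h *\<^sub>R z))^2 + 2 * (h * (norm z)^2))"
        using iGz2 iz2 by simp
      fix z :: "real^'d"
      have "(norm (?G z))^2 = (norm ((?G z - sqrt h *\<^sub>R z) - (- (sqrt h *\<^sub>R z))))^2" by simp
      also have "\<dots> \<le> 2 * (norm (?G z - sqrt h *\<^sub>R z))^2 + 2 * (norm (- (sqrt h *\<^sub>R z)))^2"
        by (rule pt)
      finally show "(norm (?G z))^2 \<le> 2 * (norm (?G z - sqrt h *\<^sub>R z))^2 + 2 * (h * (norm z)^2)"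
        using nsz[of z] by simp
    qed (use iG2 in auto)
    also have "\<dots> = 2 * E2 + 2 * h * D"
      unfolding E2_def D_def using iGz2 iz2 by simp
    also have "\<dots> \<le> 2 * ((Cq 2)^2 * h) + 2 * h * D" using E2b by simp
    finally show ?thesis by (simp add: algebra_simps)
  qed
qed



lemma sch_Suc_fst:
  "fst (sch b f \<sigma> H T N ys \<delta> R \<rho> (Suc j)) x =
    (let u1 = fst (sch b f \<sigma> H T N ys \<delta> R \<rho> j); h = T / real N;
         P = Pi_grid \<delta> R \<rho> (Suc (N - Suc j));
         w = (\<integral>z. snd (sch b f \<sigma> H T N ys \<delta> R \<rho> j) (P (x + \<sigma> x (u1 x) *v gq ys h z)) \<partial>gauss);
         U = (\<lambda>z. u1 (P (x + (h *\<^sub>R b x (u1 x) w + \<sigma> x (u1 x) *v gq ys h z))))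
     in (\<integral>z. U z \<partial>gauss) + f x (u1 x) ((1 / h) *\<^sub>R (\<integral>z. U z *\<^sub>R gq ys h z \<partial>gauss)) * h)"
  by (simp only: sch.simps(2) Let_def case_prod_unfold fst_conv)

lemma f_growth:
  assumes "assumption_A b f \<sigma> H L Lam lam \<alpha> K"
  shows "\<bar>f x y v\<bar> \<le> Lam * (1 + \<bar>y\<bar> + norm v)"
proof -
  have "norm (b x y v) + \<bar>f x y v\<bar> + norm (\<sigma> x y) \<le> Lam * (1 + \<bar>y\<bar> + norm v)"
    using assms unfolding assumption_A_def by blast
  then show ?thesis using norm_ge_zero[of "b x y v"] norm_ge_zero[of "\<sigma> x y"] by linarith
qed

lemma H_bound:
  assumes "assumption_A b f \<sigma> H L Lam lam \<alpha> K"
  shows "(H x)^2 \<le> K^2"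
proof -
  have "\<bar>H x\<bar> \<le> K" using assms unfolding assumption_A_def C2alpha_bounded_def by blast
  then have "\<bar>H x\<bar>^2 \<le> K^2" by (intro power_mono) auto
  then show ?thesis by simp
qed

lemma gq_meas: "(\<lambda>z. gq ys h z) \<in> borel_measurable (gauss :: (real^'d::finite) measure)"
  unfolding gauss_meas_iff gq_def by (rule nn_comp_meas)

lemma step_apply:
  fixes ys :: "(real^'d::finite) list" and u1 :: "real^'d \<Rightarrow> real"
  assumes Aa: "assumption_A b f \<sigma> H L Lam lam \<alpha> K"
    and h0: "0 < h" and h1: "h \<le> 1" and hg: "h * (12 * Lam^2 * c2 + 1) \<le> 1"
    and S: "(\<integral>z. (norm (gq ys h z))^2 \<partial>gauss) \<le> c2 * h"
    and m: "norm (\<integral>z. gq ys h z \<partial>gauss) \<le> c1 * h"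
    and GB: "\<And>z. norm (gq ys h z) \<le> BG"
    and c2: "0 \<le> c2" and c1: "0 \<le> c1" and Lam: "0 \<le> Lam"
    and UA: "\<And>x. (u1 x)^2 \<le> A0"
  shows "((\<integral>z. u1 (P (x + (h *\<^sub>R b x (u1 x) w + \<sigma> x (u1 x) *v gq ys h z))) \<partial>gauss)
          + f x (u1 x) ((1 / h) *\<^sub>R (\<integral>z. u1 (P (x + (h *\<^sub>R b x (u1 x) w + \<sigma> x (u1 x) *v gq ys h z))) *\<^sub>R gq ys h z \<partial>gauss)) * h)^2
         \<le> A0 + ((12 * Lam^2 * c2 + 1) + 12 * Lam^2 * c1^2 + 6 * Lam^2) * h * (A0 + 1)"
proof (rule prob_step[OF gauss_prob _ gq_meas UA GB S m UA _ h0 hg h1 c2 c1 Lam])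
  show "(\<lambda>z. u1 (P (x + (h *\<^sub>R b x (u1 x) w + \<sigma> x (u1 x) *v gq ys h z)))) \<in> borel_measurable gauss"
    unfolding gauss_meas_iff gq_def
    using nn_comp_meas[of "\<lambda>v. u1 (P (x + (h *\<^sub>R b x (u1 x) w + \<sigma> x (u1 x) *v (sqrt h *\<^sub>R v))))" ys]
    by simp
  show "\<bar>f x (u1 x) ((1 / h) *\<^sub>R (\<integral>z. u1 (P (x + (h *\<^sub>R b x (u1 x) w + \<sigma> x (u1 x) *v gq ys h z))) *\<^sub>R gq ys h z \<partial>gauss))\<bar>
    \<le> Lam * (1 + \<bar>u1 x\<bar> + norm ((1 / h) *\<^sub>R (\<integral>z. u1 (P (x + (h *\<^sub>R b x (u1 x) w + \<sigma> x (u1 x) *v gq ys h z))) *\<^sub>R gq ys h z \<partial>gauss)))"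
    by (rule f_growth[OF Aa])
qed

lemma sch_bound:
  fixes ys :: "(real^'d::finite) list"
  assumes Aa: "assumption_A b f \<sigma> H L Lam lam \<alpha> K"
    and hdef: "h = T / real N"
    and h0: "0 < h" and h1: "h \<le> 1" and hg: "h * (12 * Lam^2 * c2 + 1) \<le> 1"
    and S: "(\<integral>z. (norm (gq ys h z))^2 \<partial>gauss) \<le> c2 * h"
    and m: "norm (\<integral>z. gq ys h z \<partial>gauss) \<le> c1 * h"
    and GB: "\<And>z. norm (gq ys h z) \<le> BG"
    and c2: "0 \<le> c2" and c1: "0 \<le> c1" and Lam: "0 \<le> Lam"
  shows "(fst (sch b f \<sigma> H T N ys \<delta> R \<rho> j) x)^2
     \<le> (K^2 + 1) * (1 + ((12 * Lam^2 * c2 + 1) + 12 * Lam^2 * c1^2 + 6 * Lam^2) * h)^j - 1"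
proof (induction j arbitrary: x)
  case 0
  then show ?case using H_bound[OF Aa] by simp
next
  case (Suc j)
  define C0 where "C0 = (12 * Lam^2 * c2 + 1) + 12 * Lam^2 * c1^2 + 6 * Lam^2"
  define A0 where "A0 = (K^2 + 1) * (1 + C0 * h)^j - 1"
  have IH: "\<And>x. (fst (sch b f \<sigma> H T N ys \<delta> R \<rho> j) x)^2 \<le> A0"
    using Suc.IH unfolding A0_def C0_def .
  have "(fst (sch b f \<sigma> H T N ys \<delta> R \<rho> (Suc j)) x)^2 \<le> A0 + C0 * h * (A0 + 1)"
    unfolding sch_Suc_fst Let_def hdef[symmetric] C0_def
    by (rule step_apply[OF Aa h0 h1 hg S m GB c2 c1 Lam IH])
  also have "\<dots> = (K^2 + 1) * (1 + C0 * h)^(Suc j) - 1"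
    unfolding A0_def by (simp add: algebra_simps)
  finally show ?case unfolding C0_def .
qed




lemma pow_exp_bound:
  assumes "0 \<le> x" "i \<le> n"
  shows "(1 + x)^i \<le> exp (real n * x)"
proof -
  have "(1 + x)^i \<le> (1 + x)^n" using assms by (intro power_increasing) auto
  also have "\<dots> \<le> (exp x)^n" using assms by (intro power_mono) (auto simp: exp_ge_add_one_self)
  also have "\<dots> = exp (real n * x)" by (simp add: exp_of_nat_mult)
  finally show ?thesis .
qed

theorem proposition6p1:
  fixes p T L Lam lam \<alpha> K :: real
    and Cq :: "real \<Rightarrow> real"
  assumes "p \<ge> 2" and "T > 0" and "L \<ge> 0" and "Lam \<ge> 0" and "lam > 0"
    and "0 < \<alpha>" and "\<alpha> < 1" and "K \<ge> 0"
  shows "\<exists>c C. c > 0 \<and> C > 0 \<and>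
    (\<forall>(b :: real^'d::finite \<Rightarrow> real \<Rightarrow> real^'d \<Rightarrow> real^'d) f \<sigma> H (N::nat) (ys :: (real^'d) list) \<delta> R \<rho>.
       assumption_A b f \<sigma> H L Lam lam \<alpha> K \<longrightarrow>
       N \<ge> 1 \<longrightarrow> ys \<noteq> [] \<longrightarrow> \<delta> > 0 \<longrightarrow> R > 0 \<longrightarrow>
       (\<forall>q \<ge> 1. (\<integral>z. norm (gq ys (T / real N) z - sqrt (T / real N) *\<^sub>R z) powr q \<partial>gauss) powr (1 / q)
                 \<le> Cq q * sqrt (T / real N) * real (length ys) powr (- 1 / real CARD('d))) \<longrightarrow>
       T / real N < c \<longrightarrow> \<delta>\<^sup>2 < T / real N \<longrightarrow>
       real (length ys) powr (- 2 / real CARD('d)) < T / real N \<longrightarrow> \<rho> \<ge> 1 \<longrightarrow>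
       (\<forall>i \<le> N. \<forall>x \<in> C_grid \<delta> R \<rho> i. (ubar b f \<sigma> H T N ys \<delta> R \<rho> i x)\<^sup>2 \<le> C))"
proof -
  define D where "D = (\<integral>z. (norm z)^2 \<partial>(gauss :: (real^'d) measure))"
  have D0: "0 \<le> D" unfolding D_def by simp
  define c2 where "c2 = 2 * (Cq 2)^2 + 2 * D"
  define c1 where "c1 = \<bar>Cq 1\<bar>"
  define \<gamma> where "\<gamma> = 12 * Lam^2 * c2 + 1"
  define C0 where "C0 = \<gamma> + 12 * Lam^2 * c1^2 + 6 * Lam^2"
  have c20: "0 \<le> c2" unfolding c2_def using D0 by simp
  have c10: "0 \<le> c1" unfolding c1_def by simp
  have g1: "1 \<le> \<gamma>" unfolding \<gamma>_def using c20 by simp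
  have C00: "0 \<le> C0" unfolding C0_def using g1 by simp
  define C where "C = (K^2 + 1) * exp (C0 * T)"
  have Cpos: "0 < C" unfolding C_def by (intro mult_pos_pos) (auto intro: add_nonneg_pos)
  show ?thesis
  proof (rule exI[of _ "1 / \<gamma>"], rule exI[of _ C], intro conjI allI impI ballI)
    show "0 < 1 / \<gamma>" using g1 by simp
    show "0 < C" by (rule Cpos)
    fix b :: "real^'d \<Rightarrow> real \<Rightarrow> real^'d \<Rightarrow> real^'d" and f \<sigma> H and N :: nat
      and ys :: "(real^'d) list" and \<delta> R \<rho> :: real and i :: nat and x :: "real^'d"
    assume Aa: "assumption_A b f \<sigma> H L Lam lam \<alpha> K" and N1: "1 \<le> N" and ys: "ys \<noteq> []"
      and hyp: "\<forall>q \<ge> 1. (\<integral>z. norm (gq ys (T / real N) z - sqrt (T / real N) *\<^sub>R z) powr q \<partial>gauss) powr (1 / q)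
                 \<le> Cq q * sqrt (T / real N) * real (length ys) powr (- 1 / real CARD('d))"
      and hc: "T / real N < 1 / \<gamma>"
      and mh: "real (length ys) powr (- 2 / real CARD('d)) < T / real N"
      and iN: "i \<le> N"
    define h where "h = T / real N"
    have h0: "0 < h" unfolding h_def using N1 \<open>T > 0\<close> by simp
    have hg: "h * \<gamma> \<le> 1" using hc g1 unfolding h_def by (simp add: field_simps)
    have h1: "h \<le> 1"
    proof -
      have "h \<le> h * \<gamma>" using g1 h0 by simp
      then show ?thesis using hg by linarith
    qed
    have Q: "(\<integral>z. (norm (gq ys h z))^2 \<partial>gauss) \<le> (2 * (Cq 2)^2 + 2 * D) * h"
            "norm (\<integral>z. gq ys h z \<partial>gauss) \<le> \<bar>Cq 1\<bar> * h"
            "\<And>z. norm (gq ys h z) \<le> sqrt h * (\<Sum>w\<in>set ys. norm w)"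
      using quant[OF ys h0 h1, of Cq] hyp mh unfolding h_def D_def by auto
    have "(ubar b f \<sigma> H T N ys \<delta> R \<rho> i x)^2 \<le> (K^2 + 1) * (1 + C0 * h)^(N - i) - 1"
      unfolding ubar_def C0_def \<gamma>_def
      by (rule sch_bound[OF Aa h_def h0 h1 _ Q(1)[folded c2_def] Q(2)[folded c1_def] Q(3) c20 c10 \<open>Lam \<ge> 0\<close>])
         (use hg in \<open>simp add: \<gamma>_def\<close>)
    also have "\<dots> \<le> (K^2 + 1) * exp (real N * (C0 * h))"
    proof -
      have "(1 + C0 * h)^(N - i) \<le> exp (real N * (C0 * h))"
        using C00 h0 by (intro pow_exp_bound) auto
      then have "(K^2 + 1) * (1 + C0 * h)^(N - i) \<le> (K^2 + 1) * exp (real N * (C0 * h))"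
        by (intro mult_left_mono) auto
      then show ?thesis by linarith
    qed
    also have "real N * (C0 * h) = C0 * T" unfolding h_def using N1 by simp
    finally show "(ubar b f \<sigma> H T N ys \<delta> R \<rho> i x)^2 \<le> C" unfolding C_def .
  qed
qed


end
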